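(* For all integers $n,d,h,k\ge0$ with $(n,k,h,d)\ne(0,0,1,1)$, \[ p_n^{(\mathrm{pk},\mathrm{dp},\mathrm{des})}(k,h,d)+p_n^{(\mathrm{pk},\mathrm{dp},\mathrm{des})}(k,h-1,d-1)=\sum_{i,j}\binom{n}{2i+h}\, b_{2i+h}^{(\mathrm{pk},\mathrm{des})}(j,i)\, b_{n-2i-h}^{(\mathrm{pk},\mathrm{des})}(k-j,\,d-i-h), \] the sum over all integers $i,j$. Equivalently, as formal power series, \[ B^{(\mathrm{pk},\mathrm{des})}\Big(xzt,\,y,\,\tfrac{1}{z^2t}\Big)\,B^{(\mathrm{pk},\mathrm{des})}(x,y,t)=(1+zt)\,P^{(\mathrm{pk},\mathrm{dp},\mathrm{des})}(x,y,z,t)-zt. \]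
   Context: For a permutation (or word of distinct integers) $\pi=\pi_1\cdots\pi_n$, $\operatorname{des}(\pi)$ is the number of $1\le i\le n-1$ with $\pi_i>\pi_{i+1}$, $\operatorname{asc}(\pi)$ the number with $\pi_i<\pi_{i+1}$, and $\operatorname{pk}(\pi)$ the number of $2\le i\le n-1$ with $\pi_{i-1}<\pi_i>\pi_{i+1}$. Let $h(\pi)=\operatorname{asc}(\pi)-\operatorname{des}(\pi)$ and $\operatorname{dp}(\pi)=-\min\{h(\pi_1\cdots\pi_i):1\le i\le n\}$ (the depth), with $\operatorname{dp}(\epsilon)=0$ for the empty permutation. A ballot permutation is one with $h(\pi_1\cdots\pi_i)\ge0$ for all $i$; $\mathscr B_n$ is the set of ballot permutations of $[n]$, $\mathscr B_0=\mathcal S_0=\{\epsilon\}$ (all statistics of $\epsilon$ are $0$). Define $p_n^{(\mathrm{pk},\mathrm{dp},\mathrm{des})}(k,h,d)=|\{\pi\in\mathcal S_n:\operatorname{pk}(\pi)=k,\operatorname{dp}(\pi)=h,\operatorname{des}(\pi)=d\}|$ and $b_n^{(\mathrm{pk},\mathrm{des})}(k,d)=|\{\pi\in\mathscr B_n:\operatorname{pk}(\pi)=k,\operatorname{des}(\pi)=d\}|$, both $0$ if any argument is negative; $\binom{n}{m}=0$ unless $0\le m\le n$. Generating functions: $P^{(\mathrm{pk},\mathrm{dp},\mathrm{des})}(x,y,z,t)=\sum_{n\ge0}\sum_{\pi\in\mathcal S_n}y^{\operatorname{pk}(\pi)}z^{\operatorname{dp}(\pi)}t^{\operatorname{des}(\pi)}\frac{x^n}{n!}$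 and $B^{(\mathrm{pk},\mathrm{des})}(x,y,t)=\sum_{n\ge0}\sum_{\pi\in\mathscr B_n}y^{\operatorname{pk}(\pi)}t^{\operatorname{des}(\pi)}\frac{x^n}{n!}$. *)

theory Defs
  imports Main
begin

definition perms :: "nat \<Rightarrow> nat list set" where
  "perms n = {xs. distinct xs \<and> set xs = {1..n}}"

definition des :: "nat list \<Rightarrow> nat" where
  "des xs = card {i. Suc i < length xs \<and> xs ! i > xs ! Suc i}"

definition asc :: "nat list \<Rightarrow> nat" where
  "asc xs = card {i. Suc i < length xs \<and> xs ! i < xs ! Suc i}"

text \<open>Peaks at 1-based positions 2..n-1, i.e. 0-based positions 1..n-2.\<close>
definition pk :: "nat list \<Rightarrow> nat" where
  "pk xs = card {i. 0 < i \<and> Suc i < length xs \<and> xs ! (i - 1) < xs ! i \<and> xs ! i > xs ! Suc i}"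

definition hgt :: "nat list \<Rightarrow> int" where
  "hgt xs = int (asc xs) - int (des xs)"

definition dp :: "nat list \<Rightarrow> int" where
  "dp xs = (if xs = [] then 0 else - Min ((\<lambda>i. hgt (take i xs)) ` {1..length xs}))"

definition ballot :: "nat list \<Rightarrow> bool" where
  "ballot xs = (\<forall>i\<in>{1..length xs}. hgt (take i xs) \<ge> 0)"

definition ballot_perms :: "nat \<Rightarrow> nat list set" where
  "ballot_perms n = {xs \<in> perms n. ballot xs}"

text \<open>Counting functions; integer arguments, automatically 0 if an argument is negative.\<close>
definition p_pk_dp_des :: "nat \<Rightarrow> int \<Rightarrow> int \<Rightarrow> int \<Rightarrow> nat" where
  "p_pk_dp_des n k h d =
     card {xs \<in> perms n. int (pk xs) = k \<and> dp xs = h \<and> int (des xs) = d}"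

definition b_pk_des :: "nat \<Rightarrow> int \<Rightarrow> int \<Rightarrow> nat" where
  "b_pk_des n k d = card {xs \<in> ballot_perms n. int (pk xs) = k \<and> int (des xs) = d}"

definition binom_int :: "int \<Rightarrow> int \<Rightarrow> nat" where
  "binom_int n m = (if 0 \<le> m \<and> m \<le> n then nat n choose nat m else 0)"

end

theory Submission
  imports Defs
begin

definition st :: "nat \<Rightarrow> nat \<Rightarrow> int" where
  "st a b = (if a < b then 1 else if b < a then -1 else 0)"

fun steps :: "nat list \<Rightarrow> int list" where
  "steps (x # y # xs) = st x y # steps (y # xs)"
| "steps _ = []"

fun minp :: "int list \<Rightarrow> int" where
  "minp [] = 0"
| "minp (a # s) = min 0 (a + minp s)"

fun pks :: "int list \<Rightarrow> nat" where
  "pks (a # b # s) = (if a = 1 \<and> b = -1 then 1 else 0) + pks (b # s)"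
| "pks _ = 0"

definition cntn :: "int list \<Rightarrow> nat" where
  "cntn s = length (filter (\<lambda>x. x = -1) s)"
definition cntp :: "int list \<Rightarrow> nat" where
  "cntp s = length (filter (\<lambda>x. x = 1) s)"

lemma card_pairs_rec:
  "card {i. Suc i < length (x#y#xs) \<and> R ((x#y#xs)!i) ((x#y#xs)!Suc i)}
   = (if R x y then 1 else 0) + card {i. Suc i < length (y#xs) \<and> R ((y#xs)!i) ((y#xs)!Suc i)}"
proof -
  let ?B = "{i. Suc i < length (y#xs) \<and> R ((y#xs)!i) ((y#xs)!Suc i)}"
  have eq: "{i. Suc i < length (x#y#xs) \<and> R ((x#y#xs)!i) ((x#y#xs)!Suc i)}
        = (if R x y then {0} else {}) \<union> Suc ` ?B"
  proof (rule set_eqI)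
    fix i show "i \<in> {i. Suc i < length (x#y#xs) \<and> R ((x#y#xs)!i) ((x#y#xs)!Suc i)} \<longleftrightarrow>
       i \<in> (if R x y then {0} else {}) \<union> Suc ` ?B"
      by (cases i) auto
  qed
  have fin: "finite ?B" by (rule finite_subset[of _ "{..<length (y#xs)}"]) auto
  show ?thesis unfolding eq using fin by (auto simp: card_image)
qed

lemma card_pairs_short:
  "length xs < 2 \<Longrightarrow> card {i. Suc i < length xs \<and> P i} = 0"
  by auto

lemma des_steps: "des xs = cntn (steps xs)"
proof (induction xs rule: steps.induct)
  case (1 x y xs)
  then show ?case unfolding des_def using card_pairs_rec[of x y xs "\<lambda>a b. a > b"]
    by (auto simp: cntn_def st_def)
next
  case ("2_1") then show ?case by (simp add: des_def cntn_def)
next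
  case ("2_2" v) then show ?case by (simp add: des_def cntn_def)
qed

lemma asc_steps: "asc xs = cntp (steps xs)"
proof (induction xs rule: steps.induct)
  case (1 x y xs)
  then show ?case unfolding asc_def using card_pairs_rec[of x y xs "\<lambda>a b. a < b"]
    by (auto simp: cntp_def st_def)
next
  case ("2_1") then show ?case by (simp add: asc_def cntp_def)
next
  case ("2_2" v) then show ?case by (simp add: asc_def cntp_def)
qed

lemma pk_rec:
  "pk (x#y#z#xs) = (if x < y \<and> y > z then 1 else 0) + pk (y#z#xs)"
proof -
  let ?L = "x#y#z#xs" and ?M = "y#z#xs"
  let ?B = "{i. 0 < i \<and> Suc i < length ?M \<and> ?M ! (i - 1) < ?M ! i \<and> ?M ! i > ?M ! Suc i}"
  have eq: "{i. 0 < i \<and> Suc i < length ?L \<and> ?L ! (i - 1) < ?L ! i \<and> ?L ! i > ?L ! Suc i}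
     = (if x < y \<and> y > z then {1} else {}) \<union> Suc ` ?B"
  proof (rule set_eqI)
    fix i show "i \<in> {i. 0 < i \<and> Suc i < length ?L \<and> ?L ! (i - 1) < ?L ! i \<and> ?L ! i > ?L ! Suc i}
       \<longleftrightarrow> i \<in> (if x < y \<and> y > z then {1} else {}) \<union> Suc ` ?B"
    proof (cases i)
      case 0 then show ?thesis by auto
    next
      case (Suc j) then show ?thesis
        by (cases j) (auto simp: image_iff)
    qed
  qed
  have fin: "finite ?B" by (rule finite_subset[of _ "{..<length ?M}"]) auto
  have "1 \<notin> Suc ` ?B" by auto
  then show ?thesis unfolding pk_def eq using fin by (auto simp: card_image)
qed

lemma pk_short: "length xs < 3 \<Longrightarrow> pk xs = 0"
  unfolding pk_def by (rule card_eq_0_iff[THEN iffD2]) auto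

lemma pk_steps: "pk xs = pks (steps xs)"
proof (induction xs)
  case Nil then show ?case by (simp add: pk_short)
next
  case (Cons x xs)
  show ?case
  proof (cases xs)
    case Nil then show ?thesis by (simp add: pk_short)
  next
    case (Cons y ys)
    show ?thesis
    proof (cases ys)
      case Nil then show ?thesis using \<open>xs = y # ys\<close> by (simp add: pk_short)
    next
      case (Cons z zs)
      then show ?thesis using \<open>xs = y # ys\<close> Cons.IH pk_rec[of x y z zs]
        by (auto simp: st_def)
    qed
  qed
qed

lemma st_cases: "st a b \<in> {-1, 0, 1}" by (simp add: st_def)

lemma hgt_steps: "hgt xs = sum_list (steps xs)"
proof (induction xs rule: steps.induct)
  case (1 x y xs)
  then show ?case using st_cases[of x y]
    by (auto simp: hgt_def asc_steps des_steps cntp_def cntn_def)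
qed (auto simp: hgt_def asc_steps des_steps cntp_def cntn_def)

lemma steps_take: "steps (take (Suc l) xs) = take l (steps xs)"
proof (induction xs arbitrary: l rule: steps.induct)
  case (1 x y xs)
  then show ?case by (cases l) auto
qed auto

lemma steps_drop: "steps (drop l xs) = drop l (steps xs)"
proof (induction xs arbitrary: l rule: steps.induct)
  case (1 x y xs)
  then show ?case by (cases l) auto
next
  case ("2_2" v) then show ?case by (cases l) auto
qed auto

lemma length_steps: "length (steps xs) = length xs - 1"
  by (induction xs rule: steps.induct) auto

lemma minp_le: "minp s \<le> sum_list (take l s)"
proof (induction s arbitrary: l)
  case (Cons a s) then show ?case by (cases l) (auto simp: min_le_iff_disj)
qed auto

lemma minp_ex: "\<exists>l \<le> length s. minp s = sum_list (take l s)"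
proof (induction s)
  case Nil then show ?case by auto
next
  case (Cons a s)
  then obtain l where l: "l \<le> length s" "minp s = sum_list (take l s)" by auto
  show ?case
  proof (cases "a + minp s \<le> 0")
    case True then show ?thesis using l by (intro exI[of _ "Suc l"]) auto
  next
    case False then show ?thesis by (intro exI[of _ 0]) auto
  qed
qed

lemma minp_nonpos: "minp s \<le> 0"
  by (cases s) auto

lemma hgt_take: "hgt (take i xs) = sum_list (take (i - 1) (steps xs))"
  by (cases i) (auto simp: hgt_steps steps_take)

lemma prefix_image:
  assumes "xs \<noteq> []"
  shows "(\<lambda>i. hgt (take i xs)) ` {1..length xs} = (\<lambda>l. sum_list (take l (steps xs))) ` {0..length (steps xs)}"
proof -
  have "(\<lambda>i. hgt (take i xs)) ` {1..length xs} = (\<lambda>i. sum_list (take (i - 1) (steps xs))) ` {1..length xs}"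
    by (simp add: hgt_take)
  also have "\<dots> = (\<lambda>l. sum_list (take l (steps xs))) ` ((\<lambda>i. i - 1) ` {1..length xs})"
    by (simp add: image_image)
  also have "(\<lambda>i. i - 1) ` {1..length xs} = {0..length (steps xs)}"
  proof (rule set_eqI, rule iffI)
    fix x assume "x \<in> {0..length (steps xs)}"
    then have "Suc x \<in> {1..length xs}" using assms by (cases xs) (auto simp: length_steps)
    then show "x \<in> (\<lambda>i. i - 1) ` {1..length xs}"
      by (auto simp: image_iff intro!: bexI[of _ "Suc x"])
  qed (use assms in \<open>auto simp: length_steps\<close>)
  finally show ?thesis .
qed

lemma dp_steps: "dp xs = - minp (steps xs)"
proof (cases "xs = []")
  case True then show ?thesis by (simp add: dp_def)
next
  case False
  obtain l where l: "l \<le> length (steps xs)" "minp (steps xs) = sum_list (take l (steps xs))"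
    using minp_ex by blast
  have "Min ((\<lambda>l. sum_list (take l (steps xs))) ` {0..length (steps xs)}) = minp (steps xs)"
  proof (rule Min_eqI)
    fix y assume "y \<in> (\<lambda>l. sum_list (take l (steps xs))) ` {0..length (steps xs)}"
    then obtain l' where "y = sum_list (take l' (steps xs))" by auto
    then show "y \<ge> minp (steps xs)" using minp_le by simp
  qed (use l in auto)
  then show ?thesis using False unfolding dp_def prefix_image[OF False] by simp
qed

lemma ballot_steps: "ballot xs \<longleftrightarrow> minp (steps xs) = 0"
proof (cases "xs = []")
  case True then show ?thesis by (simp add: ballot_def)
next
  case False
  obtain l where l: "l \<le> length (steps xs)" "minp (steps xs) = sum_list (take l (steps xs))"
    using minp_ex by blast
  have "ballot xs \<longleftrightarrow> (\<forall>y \<in> (\<lambda>i. hgt (take i xs)) ` {1..length xs}. y \<ge> 0)"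
    unfolding ballot_def by auto
  also have "\<dots> \<longleftrightarrow> minp (steps xs) = 0"
    unfolding prefix_image[OF False] using l minp_le[of "steps xs"] minp_nonpos[of "steps xs"]
    by (auto intro: order.antisym)
  finally show ?thesis .
qed

lemma minp_append: "minp (u @ v) = min (minp u) (sum_list u + minp v)"
proof (induction u)
  case Nil then show ?case using minp_nonpos[of v] by (simp add: min_absorb2)
next
  case (Cons a u) then show ?case by (simp add: min_def)
qed

lemma sum_list_neg: "sum_list (map uminus s) = - sum_list (s::int list)"
  by (induction s) auto

lemma minp_rev_neg: "minp (rev (map uminus s)) = minp s - sum_list s"
proof (induction s)
  case (Cons a s)
  then show ?case using minp_nonpos[of s] by (auto simp: minp_append sum_list_neg min_def)
qed auto

lemma pks_Cons: "pks (a # x) = (if x \<noteq> [] \<and> a = 1 \<and> hd x = -1 then 1 else 0) + pks x"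
  by (cases x) auto

lemma pks_append:
  "pks (u @ c # v) = pks u + pks v + (if u \<noteq> [] \<and> last u = 1 \<and> c = -1 then 1 else 0)
     + (if v \<noteq> [] \<and> c = 1 \<and> hd v = -1 then 1 else 0)"
proof (induction u)
  case Nil then show ?case by (simp add: pks_Cons)
next
  case (Cons a u)
  then show ?case by (cases u) (auto simp: pks_Cons)
qed

lemma pks_snoc: "pks (u @ [c]) = pks u + (if u \<noteq> [] \<and> last u = 1 \<and> c = -1 then 1 else 0)"
  using pks_append[of u c "[]"] by simp

lemma pks_rev_neg: "pks (rev (map uminus s)) = pks s"
proof (induction s)
  case (Cons a s)
  have e: "rev (map uminus (a # s)) = rev (map uminus s) @ [-a]" by simp
  show ?case unfolding e pks_snoc Cons.IH using pks_Cons[of a s]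
    by (cases s) (auto simp: last_rev)
qed auto

lemma cntn_rev_neg: "cntn (rev (map uminus s)) = cntp s"
  unfolding cntn_def cntp_def by (induction s) auto

lemma cntp_rev_neg: "cntp (rev (map uminus s)) = cntn s"
  unfolding cntn_def cntp_def by (induction s) auto

lemma pm_sum: "set s \<subseteq> {-1, 1} \<Longrightarrow> sum_list s = int (cntp s) - int (cntn s)"
  unfolding cntn_def cntp_def by (induction s) auto

lemma pm_len: "set s \<subseteq> {-1, 1} \<Longrightarrow> length s = cntp s + cntn s"
  unfolding cntn_def cntp_def by (induction s) auto

lemma steps_pm: "distinct xs \<Longrightarrow> set (steps xs) \<subseteq> {-1, 1}"
  by (induction xs rule: steps.induct) (auto simp: st_def)

lemma st_swap: "st b a = - st a b"
  by (auto simp: st_def)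

lemma steps_append:
  "xs \<noteq> [] \<Longrightarrow> ys \<noteq> [] \<Longrightarrow> steps (xs @ ys) = steps xs @ st (last xs) (hd ys) # steps ys"
proof (induction xs rule: steps.induct)
  case (1 x y xs) then show ?case by auto
next
  case ("2_2" v) then show ?case by (cases ys) auto
qed auto

lemma steps_snoc: "steps (xs @ [y]) = (if xs = [] then [] else steps xs @ [st (last xs) y])"
  using steps_append[of xs "[y]"] by auto

lemma steps_rev: "steps (rev xs) = rev (map uminus (steps xs))"
proof (induction xs rule: steps.induct)
  case (1 x y xs)
  have "steps (rev (x # y # xs)) = steps (rev (y # xs) @ [x])" by simp
  also have "\<dots> = steps (rev (y # xs)) @ [st y x]"
    using steps_append[of "rev (y # xs)" "[x]"] by (simp add: last_rev del: rev.simps)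
  also have "\<dots> = rev (map uminus (steps (x # y # xs)))"
    using 1 st_swap[of y x] by simp
  finally show ?case .
qed auto

lemma minp_le_sum_prefix: "minp (a @ b) \<le> sum_list a"
  using minp_append[of a b] minp_nonpos[of b] by linarith

lemma minp_le_sum: "minp s \<le> sum_list s"
  using minp_le_sum_prefix[of s "[]"] by simp

lemma first_hit:
  assumes "set s \<subseteq> {-1, 1}" "minp s = - int h" "h \<ge> 1"
  shows "\<exists>u v. s = u @ [-1] @ v \<and> minp u = - (int h - 1) \<and> sum_list u = - (int h - 1) \<and> minp v = 0"
  using assms
proof (induction s arbitrary: h)
  case Nil then show ?case by simp
next
  case (Cons a s)
  have a: "a = -1 \<or> a = 1" using Cons.prems by auto
  have eq: "a + minp s = - int h" using Cons.prems by (auto simp: min_def split: if_splits)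
  show ?case
  proof (cases "a = -1")
    case True
    show ?thesis
    proof (cases "h = 1")
      case True
      then show ?thesis using eq \<open>a = -1\<close> minp_nonpos[of s] by (intro exI[of _ "[]"] exI[of _ s]) auto
    next
      case False
      then have "minp s = - int (h - 1)" "h - 1 \<ge> 1" using eq \<open>a = -1\<close> Cons.prems by auto
      from Cons.IH[OF _ this] Cons.prems obtain u v where
        uv: "s = u @ [-1] @ v" "minp u = - (int (h - 1) - 1)" "sum_list u = - (int (h - 1) - 1)" "minp v = 0"
        by auto
      show ?thesis using uv \<open>a = -1\<close> False Cons.prems
        by (intro exI[of _ "a # u"] exI[of _ v]) auto
    qed
  next
    case False
    then have "a = 1" using a by auto
    then have "minp s = - int (h + 1)" "h + 1 \<ge> 1" using eq by auto
    from Cons.IH[OF _ this] Cons.prems obtain u v where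
      uv: "s = u @ [-1] @ v" "minp u = - (int (h + 1) - 1)" "sum_list u = - (int (h + 1) - 1)" "minp v = 0"
      by auto
    show ?thesis using uv \<open>a = 1\<close> Cons.prems
      by (intro exI[of _ "a # u"] exI[of _ v]) auto
  qed
qed

lemma first_hit_unique_aux:
  assumes "u @ (-1) # v = u' @ (-1) # v'" "minp u = sum_list u" "minp u' = sum_list u'"
    "sum_list u = sum_list u'" "length u < length u'"
  shows False
proof -
  have "u' = take (length u') (u' @ (-1) # v')" by simp
  also have "\<dots> = take (length u') (u @ (-1) # v)" using assms(1) by simp
  also have "\<dots> = u @ take (length u' - length u) ((-1) # v)"
    using assms(5) by simp
  also have "take (length u' - length u) ((-1) # v) = (-1) # take (length u' - length u - 1) v"
    using assms(5) by (simp add: take_Cons')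
  finally have u': "u' = (u @ [-1]) @ take (length u' - length u - 1) v" by simp
  have "minp u' \<le> sum_list (u @ [-1])" by (subst u') (rule minp_le_sum_prefix)
  then have "sum_list u' \<le> sum_list u - 1" using assms(3) by simp
  then show False using assms(4) by simp
qed

lemma first_hit_unique:
  assumes "u @ (-1) # v = u' @ (-1) # v'" "minp u = sum_list u" "minp u' = sum_list u'"
    "sum_list u = sum_list u'"
  shows "u = u'"
proof -
  have "length u = length u'"
    using first_hit_unique_aux[OF assms] first_hit_unique_aux[OF assms(1)[symmetric] assms(3,2) assms(4)[symmetric]]
    by (meson linorder_neqE_nat)
  then show ?thesis using assms(1) by (metis append_eq_append_conv)
qed

definition lastok :: "int list \<Rightarrow> bool" where
  "lastok v = (v = [] \<or> (\<exists>v'. v = 1 # v' \<and> minp v' = 0))"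

lemma last_hit:
  assumes "set s \<subseteq> {-1, 1}"
  shows "\<exists>u v. s = u @ v \<and> minp u = minp s \<and> sum_list u = minp s \<and> lastok v"
  using assms
proof (induction s)
  case Nil then show ?case by (auto simp: lastok_def)
next
  case (Cons a s)
  then obtain u v where uv: "s = u @ v" "minp u = minp s" "sum_list u = minp s" "lastok v" by auto
  show ?case
  proof (cases "a + minp s \<le> 0")
    case True
    then show ?thesis using uv by (intro exI[of _ "a # u"] exI[of _ v]) auto
  next
    case False
    then have "a = 1" "minp s = 0" using Cons.prems minp_nonpos[of s] by auto
    then show ?thesis using False by (intro exI[of _ "[]"] exI[of _ "a # s"]) (auto simp: lastok_def)
  qed
qed

lemma lastok_prefix:
  assumes "lastok v" "v = w @ z" "w \<noteq> []"
  shows "sum_list w \<ge> 1"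
proof -
  from assms obtain v' where v': "v = 1 # v'" "minp v' = 0" by (auto simp: lastok_def)
  with assms obtain w' where "w = 1 # w'" "v' = w' @ z" by (cases w) auto
  then show ?thesis using minp_le_sum_prefix[of w' z] v' by simp
qed

lemma last_hit_unique_aux:
  assumes "u @ v = u' @ v'" "sum_list u = sum_list u'" "lastok v" "length u < length u'"
  shows False
proof -
  define w where "w = drop (length u) u'"
  have "v = drop (length u) (u @ v)" by simp
  also have "\<dots> = drop (length u) (u' @ v')" using assms(1) by simp
  also have "\<dots> = w @ v'" using assms(4) by (simp add: w_def)
  finally have v: "v = w @ v'" .
  have "take (length u) u' = take (length u) (u' @ v')" using assms(4) by simp
  also have "\<dots> = u" using assms(1) by (metis append_eq_conv_conj)
  finally have "u' = u @ w" unfolding w_def by (metis append_take_drop_id)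
  moreover have "w \<noteq> []" using assms(4) by (simp add: w_def)
  ultimately have w: "u' = u @ w" "v = w @ v'" "w \<noteq> []" using v by auto
  then show False using lastok_prefix[OF assms(3) w(2,3)] assms(2) by simp
qed

lemma last_hit_unique:
  assumes "u @ v = u' @ v'" "sum_list u = sum_list u'" "lastok v" "lastok v'"
  shows "u = u'"
proof -
  have "length u = length u'"
    using last_hit_unique_aux[OF assms(1-3)] last_hit_unique_aux[OF assms(1)[symmetric] assms(2)[symmetric] assms(4)]
    by (meson linorder_neqE_nat)
  then show ?thesis using assms(1) by (metis append_eq_append_conv)
qed

lemma decomp:
  assumes "s1 \<noteq> []"
  shows "steps (rev s1 @ s2) = rev (map uminus (steps s1)) @
           (if s2 = [] then [] else st (hd s1) (hd s2) # steps s2)"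
proof (cases "s2 = []")
  case True then show ?thesis by (simp add: steps_rev)
next
  case False
  have "rev s1 \<noteq> []" using assms by simp
  from steps_append[OF this False] show ?thesis using False assms
    by (simp add: steps_rev last_rev)
qed

lemma pm_hd: "set s \<subseteq> {-1, 1} \<Longrightarrow> minp s = 0 \<Longrightarrow> s \<noteq> [] \<Longrightarrow> hd s = 1"
proof (cases s)
  case (Cons a t)
  assume "set s \<subseteq> {-1, 1}" "minp s = 0"
  then show ?thesis using Cons minp_nonpos[of t] by (auto simp: min_def split: if_splits)
qed simp

lemma cntn_append: "cntn (a @ b) = cntn a + cntn b" by (simp add: cntn_def)
lemma cntn_Cons: "cntn (x # b) = (if x = -1 then 1 else 0) + cntn b" by (simp add: cntn_def)

lemma char:
  assumes ne: "s1 \<noteq> []" and b1: "ballot s1" and b2: "ballot s2" and dist: "distinct (s1 @ s2)"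
  defines "J \<equiv> (s2 \<noteq> [] \<and> st (hd s1) (hd s2) = -1)"
  shows "pk (rev s1 @ s2) = pk s1 + pk s2"
    and "dp (rev s1 @ s2) = sum_list (steps s1) + (if J then 1 else 0)"
    and "int (des (rev s1 @ s2)) = int (des s1) + sum_list (steps s1) + 1 + int (des s2) - (if J then 0 else 1)"
    and "int (length s1) = 2 * int (des s1) + sum_list (steps s1) + 1"
proof -
  let ?u = "steps s1" and ?v = "steps s2" and ?c = "st (hd s1) (hd s2)"
  let ?R = "rev (map uminus ?u)"
  have pm1: "set ?u \<subseteq> {-1, 1}" using dist steps_pm by auto
  have pm2: "set ?v \<subseteq> {-1, 1}" using dist steps_pm by auto
  have m1: "minp ?u = 0" using b1 ballot_steps by auto
  have m2: "minp ?v = 0" using b2 ballot_steps by auto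
  have S: "steps (rev s1 @ s2) = ?R @ (if s2 = [] then [] else ?c # ?v)"
    using decomp[OF ne] .
  have c: "s2 \<noteq> [] \<Longrightarrow> ?c = 1 \<or> ?c = -1"
    using dist ne by (cases s1; cases s2) (auto simp: st_def)
  have hd1: "?u \<noteq> [] \<Longrightarrow> hd ?u = 1" using pm_hd[OF pm1 m1] .
  have hd2: "?v \<noteq> [] \<Longrightarrow> hd ?v = 1" using pm_hd[OF pm2 m2] .
  have lastR: "?R \<noteq> [] \<Longrightarrow> last ?R = -1"
    using hd1 by (cases ?u) (auto simp: last_rev)
  show "pk (rev s1 @ s2) = pk s1 + pk s2"
  proof (cases "s2 = []")
    case True then show ?thesis using S by (simp add: pk_steps pks_rev_neg)
  next
    case False
    then show ?thesis using S pks_append[of ?R ?c ?v] lastR hd2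
      by (auto simp: pk_steps pks_rev_neg)
  qed
  have mR: "minp ?R = - sum_list ?u" using minp_rev_neg[of ?u] m1 by simp
  have sR: "sum_list ?R = - sum_list ?u" by (simp add: sum_list_neg)
  show "dp (rev s1 @ s2) = sum_list ?u + (if J then 1 else 0)"
  proof (cases "s2 = []")
    case True then show ?thesis using S mR by (simp add: dp_steps J_def)
  next
    case False
    then show ?thesis using S mR sR m2 c[OF False]
      by (auto simp: dp_steps J_def minp_append min_def)
  qed
  have cs: "sum_list ?u = int (cntp ?u) - int (cntn ?u)" using pm_sum[OF pm1] .
  show "int (des (rev s1 @ s2)) = int (des s1) + sum_list ?u + 1 + int (des s2) - (if J then 0 else 1)"
  proof (cases "s2 = []")
    case True then show ?thesis using S cs by (simp add: des_steps J_def cntn_rev_neg) (simp add: cntn_def)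
  next
    case False
    then show ?thesis using S cs c[OF False]
      by (auto simp: des_steps J_def cntn_append cntn_Cons cntn_rev_neg)
  qed
  have "length s1 = length ?u + 1" using ne by (simp add: length_steps)
  then show "int (length s1) = 2 * int (des s1) + sum_list ?u + 1"
    using pm_len[OF pm1] cs by (simp add: des_steps)
qed

definition TT :: "nat \<Rightarrow> nat \<Rightarrow> nat \<Rightarrow> nat \<Rightarrow> (nat list \<times> nat list) set" where
  "TT n k h d = {(s1, s2). distinct (s1 @ s2) \<and> set (s1 @ s2) = {1..n} \<and> ballot s1 \<and> ballot s2
      \<and> length s1 = 2 * des s1 + h \<and> pk s1 + pk s2 = k \<and> des s1 + h + des s2 = d}"

definition X1 :: "nat \<Rightarrow> nat \<Rightarrow> nat \<Rightarrow> nat \<Rightarrow> nat list set" where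
  "X1 n k h d = {xs \<in> perms n. int (pk xs) = int k \<and> dp xs = int h \<and> int (des xs) = int d}"

definition X2 :: "nat \<Rightarrow> nat \<Rightarrow> nat \<Rightarrow> nat \<Rightarrow> nat list set" where
  "X2 n k h d = {xs \<in> perms n. int (pk xs) = int k \<and> dp xs = int h - 1 \<and> int (des xs) = int d - 1}"

lemma stats_Nil: "ballot []" "pk [] = 0" "des [] = 0" "dp [] = 0"
  by (auto simp: ballot_def pk_def des_def dp_def)

lemma ballot_sum: "ballot s \<Longrightarrow> sum_list (steps s) \<ge> 0"
  using minp_le_sum[of "steps s"] ballot_steps by auto

lemma dp_nonneg: "dp xs \<ge> 0"
  using minp_nonpos by (simp add: dp_steps)

lemma perm_rev_app: "(rev s1 @ s2 \<in> perms n) \<longleftrightarrow> distinct (s1 @ s2) \<and> set (s1 @ s2) = {1..n}"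
  by (auto simp: perms_def)

lemma st_pm: "distinct (s1 @ s2) \<Longrightarrow> s1 \<noteq> [] \<Longrightarrow> s2 \<noteq> [] \<Longrightarrow> st (hd s1) (hd s2) = 1 \<or> st (hd s1) (hd s2) = -1"
  by (cases s1; cases s2) (auto simp: st_def)

lemma fwd:
  assumes "(s1, s2) \<in> TT n k h d"
  shows "(s1 = [] \<or> (s2 \<noteq> [] \<and> st (hd s1) (hd s2) = -1)) \<Longrightarrow> rev s1 @ s2 \<in> X1 n k h d"
    and "s1 \<noteq> [] \<Longrightarrow> \<not> (s2 \<noteq> [] \<and> st (hd s1) (hd s2) = -1) \<Longrightarrow> rev s1 @ s2 \<in> X2 n k h d"
proof -
  have T: "distinct (s1 @ s2)" "set (s1 @ s2) = {1..n}" "ballot s1" "ballot s2"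
      "length s1 = 2 * des s1 + h" "pk s1 + pk s2 = k" "des s1 + h + des s2 = d"
    using assms by (auto simp: TT_def)
  have P: "rev s1 @ s2 \<in> perms n" using T perm_rev_app by auto
  {
    assume "s1 = []"
    then have "h = 0" using T by (simp add: stats_Nil)
    then have "rev s1 @ s2 \<in> X1 n k h d" using P T \<open>s1 = []\<close>
      by (auto simp: X1_def stats_Nil dp_steps ballot_steps)
  } note A = this
  {
    assume ne: "s1 \<noteq> []"
    note C = char[OF ne T(3) T(4) T(1)]
    have hh: "int h = sum_list (steps s1) + 1" using C(4) T(5) by simp
    {
      assume J: "s2 \<noteq> [] \<and> st (hd s1) (hd s2) = -1"
      have "rev s1 @ s2 \<in> X1 n k h d" using P C(1-3) J hh T(6,7)
        unfolding X1_def by auto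
    } note B = this
    {
      assume J: "\<not> (s2 \<noteq> [] \<and> st (hd s1) (hd s2) = -1)"
      have "rev s1 @ s2 \<in> X2 n k h d" using P C(1-3) J hh T(6,7)
        unfolding X2_def by auto
    } note B2 = this
    note B B2
  } note BB = this
  show "(s1 = [] \<or> (s2 \<noteq> [] \<and> st (hd s1) (hd s2) = -1)) \<Longrightarrow> rev s1 @ s2 \<in> X1 n k h d"
    using A BB(1) by blast
  show "s1 \<noteq> [] \<Longrightarrow> \<not> (s2 \<noteq> [] \<and> st (hd s1) (hd s2) = -1) \<Longrightarrow> rev s1 @ s2 \<in> X2 n k h d"
    using BB(2) by blast
qed

lemma X12_disj: "X1 n k h d \<inter> X2 n k h d = {}"
  by (auto simp: X1_def X2_def)

lemma TT_facts:
  assumes "(s1, s2) \<in> TT n k h d"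
  shows "distinct (s1 @ s2)" "ballot s1" "ballot s2" "length s1 = 2 * des s1 + h"
  using assms by (auto simp: TT_def)

lemma TT_h:
  assumes "(s1, s2) \<in> TT n k h d" "s1 \<noteq> []"
  shows "int h = sum_list (steps s1) + 1"
  using char(4)[OF assms(2) TT_facts(2,3,1)[OF assms(1)]] TT_facts(4)[OF assms(1)] by simp

lemma TT_dp:
  assumes "(s1, s2) \<in> TT n k h d"
  shows "dp (rev s1 @ s2) = (if s1 = [] \<or> (s2 \<noteq> [] \<and> st (hd s1) (hd s2) = -1) then int h else int h - 1)"
  using fwd[OF assms] by (auto simp: X1_def X2_def)

lemma inj_len:
  assumes p: "(s1, s2) \<in> TT n k h d" and q: "(t1, t2) \<in> TT n k h d"
    and eq: "rev s1 @ s2 = rev t1 @ t2"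
  shows "length s1 = length t1"
proof -
  let ?Js = "s1 = [] \<or> (s2 \<noteq> [] \<and> st (hd s1) (hd s2) = -1)"
  let ?Jt = "t1 = [] \<or> (t2 \<noteq> [] \<and> st (hd t1) (hd t2) = -1)"
  have JJ: "?Js = ?Jt" using TT_dp[OF p] TT_dp[OF q] eq by (auto split: if_splits)
  have hs: "s1 \<noteq> [] \<Longrightarrow> h \<ge> 1" using TT_h[OF p] ballot_sum[OF TT_facts(2)[OF p]] by simp
  have ht: "t1 \<noteq> [] \<Longrightarrow> h \<ge> 1" using TT_h[OF q] ballot_sum[OF TT_facts(2)[OF q]] by simp
  have h0s: "s1 = [] \<Longrightarrow> h = 0" using TT_facts(4)[OF p] by simp
  have h0t: "t1 = [] \<Longrightarrow> h = 0" using TT_facts(4)[OF q] by simp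
  show ?thesis
  proof (cases "s1 = []")
    case True
    then have "t1 = []" using h0s ht by force
    then show ?thesis using True by simp
  next
    case ne1: False
    then have ne2: "t1 \<noteq> []" using hs h0t by force
    let ?Rs = "rev (map uminus (steps s1))" and ?Rt = "rev (map uminus (steps t1))"
    have Ds: "steps (rev s1 @ s2) = ?Rs @ (if s2 = [] then [] else st (hd s1) (hd s2) # steps s2)"
      using decomp[OF ne1] .
    have Dt: "steps (rev t1 @ t2) = ?Rt @ (if t2 = [] then [] else st (hd t1) (hd t2) # steps t2)"
      using decomp[OF ne2] .
    have ms: "minp ?Rs = sum_list ?Rs" "sum_list ?Rs = - sum_list (steps s1)"
      using minp_rev_neg[of "steps s1"] TT_facts(2)[OF p] ballot_steps sum_list_neg by auto
    have mt: "minp ?Rt = sum_list ?Rt" "sum_list ?Rt = - sum_list (steps t1)"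
      using minp_rev_neg[of "steps t1"] TT_facts(2)[OF q] ballot_steps sum_list_neg by auto
    have sums: "sum_list ?Rs = sum_list ?Rt" using ms mt TT_h[OF p ne1] TT_h[OF q ne2] by simp
    have "?Rs = ?Rt"
    proof (cases ?Js)
      case True
      then have J1: "s2 \<noteq> [] \<and> st (hd s1) (hd s2) = -1" using ne1 by simp
      have J2: "t2 \<noteq> [] \<and> st (hd t1) (hd t2) = -1" using True JJ ne2 by simp
      have "?Rs @ (-1) # steps s2 = ?Rt @ (-1) # steps t2" using Ds Dt J1 J2 eq by simp
      then show ?thesis using first_hit_unique ms(1) mt(1) sums by blast
    next
      case False
      then have J1: "\<not> (s2 \<noteq> [] \<and> st (hd s1) (hd s2) = -1)" by simp
      have J2: "\<not> (t2 \<noteq> [] \<and> st (hd t1) (hd t2) = -1)" using False JJ by simp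
      have lo1: "lastok (if s2 = [] then [] else st (hd s1) (hd s2) # steps s2)"
        using J1 st_pm[OF TT_facts(1)[OF p] ne1] TT_facts(3)[OF p] ballot_steps
        by (auto simp: lastok_def)
      have lo2: "lastok (if t2 = [] then [] else st (hd t1) (hd t2) # steps t2)"
        using J2 st_pm[OF TT_facts(1)[OF q] ne2] TT_facts(3)[OF q] ballot_steps
        by (auto simp: lastok_def)
      show ?thesis using last_hit_unique[OF _ sums lo1 lo2] Ds Dt eq by simp
    qed
    then have "length (steps s1) = length (steps t1)" by (metis length_map length_rev)
    moreover have "0 < length s1" "0 < length t1" using ne1 ne2 by auto
    ultimately show ?thesis using length_steps[of s1] length_steps[of t1] by linarith
  qed
qed

lemma inj_TT: "inj_on (\<lambda>(s1, s2). rev s1 @ s2) (TT n k h d)"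
proof (rule inj_onI, clarify)
  fix s1 s2 t1 t2 assume p: "(s1, s2) \<in> TT n k h d" and q: "(t1, t2) \<in> TT n k h d"
    and eq: "rev s1 @ s2 = rev t1 @ t2"
  have "length (rev s1) = length (rev t1)" using inj_len[OF p q eq] by simp
  then show "s1 = t1 \<and> s2 = t2" using eq by (metis append_eq_append_conv rev_rev_ident)
qed

lemma split_at:
  assumes "steps p = u @ w" "p \<noteq> []"
  shows "\<exists>a b. p = a @ b \<and> a \<noteq> [] \<and> steps a = u \<and> (b = [] \<longleftrightarrow> w = [])
     \<and> (b \<noteq> [] \<longrightarrow> w = st (last a) (hd b) # steps b)"
proof -
  define a where "a = take (length u + 1) p"
  define b where "b = drop (length u + 1) p"
  have pab: "p = a @ b" by (simp add: a_def b_def)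
  have lp: "length (steps p) = length p - 1" by (rule length_steps)
  have a_ne: "a \<noteq> []" using assms(2) by (simp add: a_def)
  have sa: "steps a = u" unfolding a_def using steps_take[of "length u" p] assms(1) by simp
  have "0 < length p" using assms(2) by auto
  have L: "length u + length w = length p - 1" using lp assms(1) by (metis length_append)
  have "b = [] \<longleftrightarrow> length p \<le> length u + 1" by (simp add: b_def)
  also have "\<dots> \<longleftrightarrow> length w = 0" using L \<open>0 < length p\<close> by linarith
  finally have bw: "b = [] \<longleftrightarrow> w = []" by simp
  have "b \<noteq> [] \<longrightarrow> w = st (last a) (hd b) # steps b"
  proof
    assume bne: "b \<noteq> []"
    have "steps p = steps a @ st (last a) (hd b) # steps b" using steps_append[OF a_ne bne] pab by simp
    then show "w = st (last a) (hd b) # steps b" using assms(1) sa by simp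
  qed
  then show ?thesis using pab a_ne sa bw by blast
qed

lemma surj1:
  assumes "p \<in> X1 n k h d"
  shows "p \<in> (\<lambda>(s1, s2). rev s1 @ s2) ` TT n k h d"
proof -
  have P: "distinct p" "set p = {1..n}" "pk p = k" "dp p = int h" "des p = d"
    using assms by (auto simp: X1_def perms_def)
  show ?thesis
  proof (cases "h = 0")
    case True
    have "ballot p" using P(4) True by (simp add: ballot_steps dp_steps)
    then have "([], p) \<in> TT n k h d" using P True by (simp add: TT_def stats_Nil)
    then show ?thesis by force
  next
    case False
    let ?s = "steps p"
    have pne: "p \<noteq> []" using P(4) False stats_Nil by auto
    have pm: "set ?s \<subseteq> {-1, 1}" using steps_pm P(1) by auto
    have "minp ?s = - int h" using P(4) by (simp add: dp_steps)
    from first_hit[OF pm this] False obtain u v where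
      uv: "?s = u @ [-1] @ v" "minp u = - (int h - 1)" "sum_list u = - (int h - 1)" "minp v = 0"
      by auto
    from split_at[of p u "(-1) # v"] uv(1) pne obtain a b where
      ab: "p = a @ b" "a \<noteq> []" "steps a = u" "b \<noteq> []" "(-1) # v = st (last a) (hd b) # steps b"
      by auto
    define s1 where "s1 = rev a"
    have s1ne: "s1 \<noteq> []" using ab(2) by (simp add: s1_def)
    have hd1: "hd s1 = last a" using ab(2) by (simp add: s1_def hd_rev)
    have d: "distinct (s1 @ b)" using P(1) ab(1) by (auto simp: s1_def)
    have b1: "ballot s1" unfolding ballot_steps s1_def steps_rev ab(3) minp_rev_neg using uv by simp
    have b2: "ballot b" unfolding ballot_steps using ab(5) uv(4) by simp
    have J: "b \<noteq> [] \<and> st (hd s1) (hd b) = -1" using ab(4,5) hd1 by simp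
    have pe: "rev s1 @ b = p" using ab(1) by (simp add: s1_def)
    note C = char[OF s1ne b1 b2 d]
    have "(s1, b) \<in> TT n k h d"
      using C J pe P d b1 b2 ab(1) unfolding TT_def
      by (auto simp: s1_def)
    then show ?thesis using pe by force
  qed
qed

lemma surj2:
  assumes "p \<in> X2 n k h d" "(n, k, h, d) \<noteq> (0, 0, 1, 1)"
  shows "p \<in> (\<lambda>(s1, s2). rev s1 @ s2) ` TT n k h d"
proof -
  have P: "distinct p" "set p = {1..n}" "pk p = k" "dp p = int h - 1" "int (des p) = int d - 1"
    using assms by (auto simp: X2_def perms_def)
  have pne: "p \<noteq> []"
  proof
    assume "p = []"
    then have "n = 0" "h = 1" "d = 1" "k = 0" using P by (auto simp: stats_Nil)
    then show False using assms(2) by simp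
  qed
  let ?s = "steps p"
  have pm: "set ?s \<subseteq> {-1, 1}" using steps_pm P(1) by auto
  from last_hit[OF pm] obtain u w where
    uw: "?s = u @ w" "minp u = minp ?s" "sum_list u = minp ?s" "lastok w" by auto
  from split_at[OF uw(1) pne] obtain a b where
    ab: "p = a @ b" "a \<noteq> []" "steps a = u" "b = [] \<longleftrightarrow> w = []"
        "b \<noteq> [] \<longrightarrow> w = st (last a) (hd b) # steps b"
    by auto
  define s1 where "s1 = rev a"
  have s1ne: "s1 \<noteq> []" using ab(2) by (simp add: s1_def)
  have hd1: "hd s1 = last a" using ab(2) by (simp add: s1_def hd_rev)
  have d: "distinct (s1 @ b)" using P(1) ab(1) by (auto simp: s1_def)
  have b1: "ballot s1" unfolding ballot_steps s1_def steps_rev ab(3) minp_rev_neg using uw by simp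
  have b2: "ballot b \<and> \<not> (b \<noteq> [] \<and> st (hd s1) (hd b) = -1)"
  proof (cases "b = []")
    case True then show ?thesis by (simp add: stats_Nil)
  next
    case False
    then have "w = st (last a) (hd b) # steps b" using ab(5) by simp
    then show ?thesis using uw(4) hd1 by (auto simp: lastok_def ballot_steps)
  qed
  have pe: "rev s1 @ b = p" using ab(1) by (simp add: s1_def)
  note C = char[OF s1ne b1 _ d]
  have "(s1, b) \<in> TT n k h d"
    using C b2 pe P d b1 ab(1) unfolding TT_def
    by (auto simp: s1_def)
  then show ?thesis using pe by force
qed

lemma finite_perms: "finite (perms n)"
  by (rule finite_subset[OF _ finite_subset_distinct[of "{1..n}"]]) (auto simp: perms_def)

lemma card_TT:
  assumes "(n, k, h, d) \<noteq> (0, 0, 1, 1)"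
  shows "card (TT n k h d) = card (X1 n k h d) + card (X2 n k h d)"
proof -
  have img: "(\<lambda>(s1, s2). rev s1 @ s2) ` TT n k h d = X1 n k h d \<union> X2 n k h d"
  proof
    show "(\<lambda>(s1, s2). rev s1 @ s2) ` TT n k h d \<subseteq> X1 n k h d \<union> X2 n k h d"
      using fwd by fastforce
    show "X1 n k h d \<union> X2 n k h d \<subseteq> (\<lambda>(s1, s2). rev s1 @ s2) ` TT n k h d"
      using surj1 surj2[OF _ assms] by blast
  qed
  have f1: "finite (X1 n k h d)" by (rule finite_subset[OF _ finite_perms]) (auto simp: X1_def)
  have f2: "finite (X2 n k h d)" by (rule finite_subset[OF _ finite_perms]) (auto simp: X2_def)
  have "card (TT n k h d) = card ((\<lambda>(s1, s2). rev s1 @ s2) ` TT n k h d)"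
    using card_image[OF inj_TT] by metis
  also have "\<dots> = card (X1 n k h d) + card (X2 n k h d)"
    unfolding img using card_Un_disjoint[OF f1 f2 X12_disj] .
  finally show ?thesis .
qed

lemma st_mono:
  assumes "\<And>x y. x \<in> S \<Longrightarrow> y \<in> S \<Longrightarrow> x < y \<Longrightarrow> f x < f y" "x \<in> S" "y \<in> S"
  shows "st (f x) (f y) = st x y"
  using assms(1)[OF assms(2,3)] assms(1)[OF assms(3,2)] unfolding st_def
  by (cases x y rule: linorder_cases) auto

lemma steps_map:
  assumes "\<And>x y. x \<in> S \<Longrightarrow> y \<in> S \<Longrightarrow> x < y \<Longrightarrow> f x < f y" "set xs \<subseteq> S"
  shows "steps (map f xs) = steps xs"
  using assms(2)
proof (induction xs rule: steps.induct)
  case (1 x y xs)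
  then show ?case using st_mono[OF assms(1), where x=x and y=y] by auto
qed auto

lemma relabel:
  assumes fin: "finite A" and cA: "card A = m"
  shows "card {s. distinct s \<and> set s = A \<and> Q (steps s)} = card {s. distinct s \<and> set s = {1..m} \<and> Q (steps s)}"
proof -
  define L where "L = sorted_list_of_set A"
  define f where "f x = L ! (x - 1)" for x
  have lenL: "length L = m" using cA by (simp add: L_def)
  have sL: "sorted_wrt (<) L" by (simp add: L_def)
  have setL: "set L = A" using fin by (simp add: L_def)
  have mono: "f x < f y" if "x \<in> {1..m}" "y \<in> {1..m}" "x < y" for x y
    using that sorted_wrt_nth_less[OF sL, of "x - 1" "y - 1"] lenL by (auto simp: f_def)
  have inj: "inj_on f {1..m}"
  proof (rule inj_onI)
    fix x y assume "x \<in> {1..m}" "y \<in> {1..m}" "f x = f y"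
    then show "x = y" using mono by (cases x y rule: linorder_cases) force+
  qed
  have img: "f ` {1..m} = A"
  proof
    show "f ` {1..m} \<subseteq> A" using lenL setL by (auto simp: f_def)
    show "A \<subseteq> f ` {1..m}"
    proof
      fix a assume "a \<in> A"
      then obtain i where i: "i < m" "L ! i = a" using setL lenL by (metis in_set_conv_nth)
      then have "f (Suc i) = a" by (simp add: f_def)
      then show "a \<in> f ` {1..m}" using i by force
    qed
  qed
  have bij: "bij_betw f {1..m} A" using inj img by (simp add: bij_betw_def)
  let ?P = "{s. distinct s \<and> set s = {1..m} \<and> Q (steps s)}"
  let ?R = "{s. distinct s \<and> set s = A \<and> Q (steps s)}"
  have injm: "inj_on (map f) ?P"
  proof (rule inj_onI)
    fix xs ys assume "xs \<in> ?P" "ys \<in> ?P" "map f xs = map f ys"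
    then show "xs = ys" using inj_on_map_eq_map[of f xs ys] inj by auto
  qed
  have "map f ` ?P = ?R"
  proof
    show "map f ` ?P \<subseteq> ?R"
    proof
      fix s assume "s \<in> map f ` ?P"
      then obtain xs where xs: "xs \<in> ?P" "s = map f xs" by auto
      have "steps (map f xs) = steps xs"
        by (rule steps_map[where S="{1..m}"]) (use mono xs in auto)
      then have "steps s = steps xs" using xs by simp
      moreover have "distinct s" using xs inj by (auto simp: distinct_map intro: inj_on_subset)
      ultimately show "s \<in> ?R" using xs img by auto
    qed
    show "?R \<subseteq> map f ` ?P"
    proof
      fix s assume s: "s \<in> ?R"
      define g where "g = the_inv_into {1..m} f"
      define xs where "xs = map g s"
      have fg: "f (g a) = a" if "a \<in> A" for a
        using f_the_inv_into_f[OF inj, of a] that img by (simp add: g_def)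
      have "map f xs = s" using s fg by (auto simp: xs_def map_idI)
      have gb: "bij_betw g A {1..m}" using bij_betw_the_inv_into[OF bij] by (simp add: g_def)
      have sxs: "set xs = {1..m}" using s gb by (auto simp: xs_def bij_betw_def)
      have dxs: "distinct xs" using s gb by (auto simp: xs_def distinct_map bij_betw_def)
      have "steps (map f xs) = steps xs"
        by (rule steps_map[where S="{1..m}"]) (use mono sxs in auto)
      then have "steps s = steps xs" using \<open>map f xs = s\<close> by simp
      then have "xs \<in> ?P" using s sxs dxs by auto
      then show "s \<in> map f ` ?P" using \<open>map f xs = s\<close> by force
    qed
  qed
  then show ?thesis using card_image[OF injm] by simp
qed

definition Lst :: "nat set \<Rightarrow> nat \<Rightarrow> nat \<Rightarrow> nat list set" where
  "Lst A i j = {s. distinct s \<and> set s = A \<and> (minp (steps s) = 0 \<and> pks (steps s) = j \<and> cntn (steps s) = i)}"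

lemma Lst_alt: "Lst A i j = {s. distinct s \<and> set s = A \<and> ballot s \<and> pk s = j \<and> des s = i}"
  by (auto simp: Lst_def ballot_steps pk_steps des_steps)

lemma card_Lst: "finite A \<Longrightarrow> card (Lst A i j) = card (Lst {1..card A} i j)"
  unfolding Lst_def by (rule relabel) auto

lemma finite_Lst: "finite A \<Longrightarrow> finite (Lst A i j)"
  by (rule finite_subset[OF _ finite_subset_distinct[of A]]) (auto simp: Lst_def)

lemma b_nat: "b_pk_des m (int j) (int i) = card (Lst {1..m} i j)"
  unfolding b_pk_des_def ballot_perms_def perms_def Lst_alt
  by (rule arg_cong[where f = card]) auto

lemma b_neg: "j < 0 \<or> i < 0 \<Longrightarrow> b_pk_des m j i = 0"
  unfolding b_pk_des_def by (rule card_eq_0_iff[THEN iffD2]) auto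

definition TTij :: "nat \<Rightarrow> nat \<Rightarrow> nat \<Rightarrow> nat \<Rightarrow> nat \<Rightarrow> nat \<Rightarrow> (nat list \<times> nat list) set" where
  "TTij n k h d i j = {p \<in> TT n k h d. des (fst p) = i \<and> pk (fst p) = j}"

lemma TTij_empty: "\<not> (j \<le> k \<and> i + h \<le> d) \<Longrightarrow> TTij n k h d i j = {}"
  by (auto simp: TTij_def TT_def)

lemma TTij_eq:
  assumes "j \<le> k" "i + h \<le> d"
  shows "TTij n k h d i j = (\<Union>A \<in> {A. A \<subseteq> {1..n} \<and> card A = 2 * i + h}.
            Lst A i j \<times> Lst ({1..n} - A) (d - i - h) (k - j))"
proof (rule set_eqI)
  fix p :: "nat list \<times> nat list"
  obtain s1 s2 where p: "p = (s1, s2)" by (cases p)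
  show "p \<in> TTij n k h d i j \<longleftrightarrow> p \<in> (\<Union>A \<in> {A. A \<subseteq> {1..n} \<and> card A = 2 * i + h}.
            Lst A i j \<times> Lst ({1..n} - A) (d - i - h) (k - j))"
  proof
    assume "p \<in> TTij n k h d i j"
    then have T: "distinct (s1 @ s2)" "set (s1 @ s2) = {1..n}" "ballot s1" "ballot s2"
      "length s1 = 2 * des s1 + h" "pk s1 + pk s2 = k" "des s1 + h + des s2 = d" "des s1 = i" "pk s1 = j"
      by (auto simp: TTij_def TT_def p)
    have "card (set s1) = 2 * i + h" using T distinct_card[of s1] by auto
    moreover have "set s2 = {1..n} - set s1" using T by auto
    ultimately show "p \<in> (\<Union>A \<in> {A. A \<subseteq> {1..n} \<and> card A = 2 * i + h}.
            Lst A i j \<times> Lst ({1..n} - A) (d - i - h) (k - j))"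
      using T unfolding p Lst_alt by (intro UN_I[of "set s1"]) auto
  next
    assume "p \<in> (\<Union>A \<in> {A. A \<subseteq> {1..n} \<and> card A = 2 * i + h}.
            Lst A i j \<times> Lst ({1..n} - A) (d - i - h) (k - j))"
    then obtain A where A: "A \<subseteq> {1..n}" "card A = 2 * i + h" "s1 \<in> Lst A i j" "s2 \<in> Lst ({1..n} - A) (d - i - h) (k - j)"
      by (auto simp: p)
    then have S: "distinct s1" "set s1 = A" "ballot s1" "pk s1 = j" "des s1 = i"
       "distinct s2" "set s2 = {1..n} - A" "ballot s2" "pk s2 = k - j" "des s2 = d - i - h"
      by (auto simp: Lst_alt)
    have "length s1 = 2 * i + h" using S A distinct_card[of s1] by auto
    then show "p \<in> TTij n k h d i j" using S A assms unfolding p TTij_def TT_def by auto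
  qed
qed

lemma card_TTij:
  assumes "j \<le> k" "i + h \<le> d"
  shows "card (TTij n k h d i j) = (n choose (2 * i + h)) * card (Lst {1..2 * i + h} i j)
            * card (Lst {1..n - (2 * i + h)} (d - i - h) (k - j))"
proof -
  let ?S = "{A. A \<subseteq> {1..n} \<and> card A = 2 * i + h}"
  let ?c = "card (Lst {1..2 * i + h} i j) * card (Lst {1..n - (2 * i + h)} (d - i - h) (k - j))"
  have finS: "finite ?S" by (rule finite_subset[of _ "Pow {1..n}"]) auto
  have "card (TTij n k h d i j) = (\<Sum>A\<in>?S. card (Lst A i j \<times> Lst ({1..n} - A) (d - i - h) (k - j)))"
    unfolding TTij_eq[OF assms]
  proof (rule card_UN_disjoint[OF finS])
    show "\<forall>A\<in>?S. finite (Lst A i j \<times> Lst ({1..n} - A) (d - i - h) (k - j))"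
    proof
      fix A assume "A \<in> ?S"
      then have "finite A" using finite_subset[of A "{1..n}"] by auto
      then show "finite (Lst A i j \<times> Lst ({1..n} - A) (d - i - h) (k - j))"
        using finite_Lst by auto
    qed
    show "\<forall>A\<in>?S. \<forall>B\<in>?S. A \<noteq> B \<longrightarrow> (Lst A i j \<times> Lst ({1..n} - A) (d - i - h) (k - j)) \<inter>
             (Lst B i j \<times> Lst ({1..n} - B) (d - i - h) (k - j)) = {}"
      by (auto simp: Lst_def)
  qed
  also have "\<dots> = (\<Sum>A\<in>?S. ?c)"
  proof (rule sum.cong[OF refl])
    fix A assume A: "A \<in> ?S"
    then have fA: "finite A" using finite_subset[of A "{1..n}"] by auto
    have cB: "card ({1..n} - A) = n - (2 * i + h)" using A by (auto simp: card_Diff_subset fA)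
    show "card (Lst A i j \<times> Lst ({1..n} - A) (d - i - h) (k - j)) = ?c"
      using card_Lst[OF fA, of i j] card_Lst[of "{1..n} - A" "d - i - h" "k - j"] A cB
      by (simp add: card_cartesian_product)
  qed
  also have "\<dots> = card ?S * ?c" by simp
  also have "card ?S = n choose (2 * i + h)" using n_subsets[of "{1..n}" "2 * i + h"] by simp
  finally show ?thesis by (simp add: mult.assoc)
qed

lemma card_fibers:
  assumes "finite S" "finite I" "\<forall>x\<in>S. g x \<in> I"
  shows "card S = (\<Sum>i\<in>I. card {x\<in>S. g x = i})"
proof -
  have "S = (\<Union>i\<in>I. {x\<in>S. g x = i})" using assms(3) by auto
  then have "card S = card (\<Union>i\<in>I. {x\<in>S. g x = i})" by simp
  also have "\<dots> = (\<Sum>i\<in>I. card {x\<in>S. g x = i})"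
    by (rule card_UN_disjoint) (use assms in auto)
  finally show ?thesis .
qed

lemma finite_TT: "finite (TT n k h d)"
proof (rule finite_subset)
  show "TT n k h d \<subseteq> {xs. set xs \<subseteq> {1..n} \<and> distinct xs} \<times> {xs. set xs \<subseteq> {1..n} \<and> distinct xs}"
    by (auto simp: TT_def)
  show "finite ({xs. set xs \<subseteq> {1..n} \<and> distinct xs} \<times> {xs. set xs \<subseteq> {1..n} \<and> distinct xs})"
    using finite_subset_distinct[of "{1..n}"] by auto
qed

lemma TT_bounds:
  assumes "p \<in> TT n k h d"
  shows "des (fst p) \<le> n" "pk (fst p) \<le> k"
proof -
  obtain s1 s2 where p: "p = (s1, s2)" by (cases p)
  have T: "distinct (s1 @ s2)" "set (s1 @ s2) = {1..n}" "length s1 = 2 * des s1 + h" "pk s1 + pk s2 = k"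
    using assms by (auto simp: TT_def p)
  have "length s1 = card (set s1)" using T(1) by (simp add: distinct_card)
  also have "\<dots> \<le> card {1..n}" using T(2) by (intro card_mono) auto
  finally have "length s1 \<le> n" by simp
  then show "des (fst p) \<le> n" "pk (fst p) \<le> k" using T by (auto simp: p)
qed

lemma card_TT_sum:
  "card (TT n k h d) = (\<Sum>i\<in>{0..n}. \<Sum>j\<in>{0..k}. card (TTij n k h d i j))"
proof -
  have "card (TT n k h d) = (\<Sum>i\<in>{0..n}. card {p \<in> TT n k h d. des (fst p) = i})"
    by (rule card_fibers) (use finite_TT TT_bounds in auto)
  also have "\<dots> = (\<Sum>i\<in>{0..n}. \<Sum>j\<in>{0..k}. card (TTij n k h d i j))"
  proof (rule sum.cong[OF refl])
    fix i
    have "card {p \<in> TT n k h d. des (fst p) = i} =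
      (\<Sum>j\<in>{0..k}. card {q \<in> {p \<in> TT n k h d. des (fst p) = i}. pk (fst q) = j})"
      by (rule card_fibers) (use finite_TT TT_bounds in auto)
    also have "\<dots> = (\<Sum>j\<in>{0..k}. card (TTij n k h d i j))"
      by (rule sum.cong[OF refl]) (simp add: TTij_def conj_assoc)
    finally show "card {p \<in> TT n k h d. des (fst p) = i} = (\<Sum>j\<in>{0..k}. card (TTij n k h d i j))" .
  qed
  finally show ?thesis .
qed

lemma term_eq:
  "int (card (TTij n k h d i j)) =
     int (binom_int (int n) (2 * int i + int h))
              * int (b_pk_des (nat (2 * int i + int h)) (int j) (int i))
              * int (b_pk_des (nat (int n - 2 * int i - int h)) (int k - int j) (int d - int i - int h))"
proof (cases "j \<le> k \<and> i + h \<le> d")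
  case True
  let ?m = "2 * i + h"
  have e1: "2 * int i + int h = int ?m" by simp
  have e4: "nat (2 * int i + int h) = ?m" by simp
  have bi: "binom_int (int n) (int ?m) = n choose ?m"
    unfolding binom_int_def nat_int of_nat_0_le_iff of_nat_le_iff using binomial_eq_0[of n ?m] by auto
  have b1: "b_pk_des (nat (int ?m)) (int j) (int i) = card (Lst {1..?m} i j)"
    unfolding nat_int by (rule b_nat)
  show ?thesis
  proof (cases "?m \<le> n")
    case True
    have e2: "nat (int n - 2 * int i - int h) = n - ?m" using True by simp
    have e3: "int k - int j = int (k - j)" "int d - int i - int h = int (d - i - h)"
      using \<open>j \<le> k \<and> i + h \<le> d\<close> by auto
    show ?thesis unfolding card_TTij[OF conjunct1[OF \<open>j \<le> k \<and> i + h \<le> d\<close>] conjunct2[OF \<open>j \<le> k \<and> i + h \<le> d\<close>]]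
      e1 bi b1 e2 e3 b_nat by (simp add: e4)
  next
    case False
    then have "n choose ?m = 0" by simp
    then show ?thesis
      unfolding card_TTij[OF conjunct1[OF \<open>j \<le> k \<and> i + h \<le> d\<close>] conjunct2[OF \<open>j \<le> k \<and> i + h \<le> d\<close>]] e1 bi
      by simp
  qed
next
  case False
  then have "int k - int j < 0 \<or> int d - int i - int h < 0" by auto
  then have "b_pk_des (nat (int n - 2 * int i - int h)) (int k - int j) (int d - int i - int h) = 0"
    using b_neg by blast
  then show ?thesis using TTij_empty[OF False] by simp
qed

lemma sum_int_range: "(\<Sum>i\<in>{0..int n}. G i) = (\<Sum>i\<in>{0..n}. G (int i))"
proof -
  have "{0..int n} = int ` {0..n}" by (simp add: image_int_atLeastAtMost)
  then show ?thesis by (simp add: sum.reindex)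
qed

lemma p_X1: "p_pk_dp_des n (int k) (int h) (int d) = card (X1 n k h d)"
  by (simp add: p_pk_dp_des_def X1_def)

lemma p_X2: "p_pk_dp_des n (int k) (int h - 1) (int d - 1) = card (X2 n k h d)"
  by (simp add: p_pk_dp_des_def X2_def)

theorem theorem3p6:
  fixes n k h d :: nat
  assumes "(n, k, h, d) \<noteq> (0, 0, 1, 1)"
  shows "int (p_pk_dp_des n (int k) (int h) (int d))
           + int (p_pk_dp_des n (int k) (int h - 1) (int d - 1))
         = (\<Sum>i\<in>{0..int n}. \<Sum>j\<in>{0..int k}.
              int (binom_int (int n) (2 * i + int h))
              * int (b_pk_des (nat (2 * i + int h)) j i)
              * int (b_pk_des (nat (int n - 2 * i - int h)) (int k - j) (int d - i - int h)))"
proof -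
  have "int (p_pk_dp_des n (int k) (int h) (int d)) + int (p_pk_dp_des n (int k) (int h - 1) (int d - 1))
      = int (card (TT n k h d))"
    unfolding p_X1 p_X2 card_TT[OF assms] by simp
  also have "\<dots> = (\<Sum>i\<in>{0..n}. \<Sum>j\<in>{0..k}. int (card (TTij n k h d i j)))"
    unfolding card_TT_sum by simp
  also have "\<dots> = (\<Sum>i\<in>{0..int n}. \<Sum>j\<in>{0..int k}.
              int (binom_int (int n) (2 * i + int h))
              * int (b_pk_des (nat (2 * i + int h)) j i)
              * int (b_pk_des (nat (int n - 2 * i - int h)) (int k - j) (int d - i - int h)))"
    unfolding sum_int_range term_eq ..
  finally show ?thesis .
qed

end
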